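(* Let $p\ge 2$ and $q\in\{0,1,\dots,p-2\}$ be integers, let $x$ be a right vertex of $T_H$, let $f$ be any $2p$ distance coloring of $T_H$, and let $v\in\mathcal{F}^{c}_{x,p-q}$ be a corner vertex. Then $$\big|\{u\in\mathcal{F}_{x,p+q+1} : f(u)=f(v)\}\big|\le 2.$$
   Context: $T_H$ is the infinite hexagonal grid with vertex set $\mathbb{Z}^2$: $(i,j)$ is adjacent to $(i,j\pm1)$, and $(i,j)$ is adjacent to $(i+1,j)$ iff $i+j$ is even; no other edges. A vertex $(i,j)$ with $i+j$ even is called a right vertex. $d(u,v)$ is graph distance. A $2p$ distance coloring is a map $f:V(T_H)\to\{1,\dots,n\}$ with $f(u)\ne f(v)$ for all distinct $u,v$ with $d(u,v)\le 2p$. For a vertex $x$ and integer $k\ge0$, $\mathcal{F}_{x,k}=\{u: d(x,u)=k\}$. For a right vertex $x=(i,j)$ and $k\ge2$, the six corner vertices of $\mathcal{F}_{x,k}$ are $(i,j+k)$, $(i+\lceil k/2\rceil, j+\lfloor k/2\rfloor)$, $(i+\lceil k/2\rceil, j-\lfloor k/2\rfloor)$, $(i,j-k)$, $(i-\lfloor k/2\rfloor, j-\lceil k/2\rceil)$, $(i-\lfloor k/2\rfloor, j+\lceil k/2\rceil)$ (all lie in $\mathcal{F}_{x,k}$); their set is denoted $\mathcal{F}^c_{x,k}$, and $\mathcal{F}^{nc}_{x,k}=\mathcal{F}_{x,k}\setminus\mathcal{F}^c_{x,k}$ is the set of non corner vertices. *)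

theory Defs
  imports Main
begin

type_synonym vtx = "int \<times> int"

text \<open>Edges of the hexagonal grid T_H on Z^2.\<close>
definition hex_adj :: "vtx \<Rightarrow> vtx \<Rightarrow> bool" where
  "hex_adj u v \<longleftrightarrow>
     (fst v = fst u \<and> (snd v = snd u + 1 \<or> snd v = snd u - 1)) \<or>
     (snd v = snd u \<and> fst v = fst u + 1 \<and> even (fst u + snd u)) \<or>
     (snd v = snd u \<and> fst u = fst v + 1 \<and> even (fst v + snd v))"

definition right_vertex :: "vtx \<Rightarrow> bool" where
  "right_vertex u \<longleftrightarrow> even (fst u + snd u)"

fun walk :: "nat \<Rightarrow> vtx \<Rightarrow> vtx \<Rightarrow> bool" where
  "walk 0 u v \<longleftrightarrow> u = v"
| "walk (Suc n) u v \<longleftrightarrow> (\<exists>w. hex_adj u w \<and> walk n w v)"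

text \<open>graph distance (T_H is connected, so the LEAST is attained)\<close>
definition hdist :: "vtx \<Rightarrow> vtx \<Rightarrow> nat" where
  "hdist u v = (LEAST n. walk n u v)"

definition dist_coloring :: "nat \<Rightarrow> nat \<Rightarrow> (vtx \<Rightarrow> nat) \<Rightarrow> bool" where
  "dist_coloring p n f \<longleftrightarrow> (\<forall>u. f u \<in> {1..n}) \<and>
     (\<forall>u v. u \<noteq> v \<and> hdist u v \<le> 2 * p \<longrightarrow> f u \<noteq> f v)"

definition sphere :: "vtx \<Rightarrow> nat \<Rightarrow> vtx set" where
  "sphere x k = {u. hdist x u = k}"

text \<open>corner vertices of F_{x,k} (x a right vertex, k \<ge> 2);
  ceil(k/2) = (k+1) div 2, floor(k/2) = k div 2\<close>
definition corners :: "vtx \<Rightarrow> nat \<Rightarrow> vtx set" where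
  "corners x k = (let i = fst x; j = snd x; c = int ((k + 1) div 2); d = int (k div 2) in
     {(i, j + int k), (i + c, j + d), (i + c, j - d), (i, j - int k),
      (i - d, j - c), (i - d, j + c)})"

end

theory Submission
  imports Defs
begin


definition D :: "int \<Rightarrow> int \<Rightarrow> bool \<Rightarrow> int" where
  "D dx dy r = max (\<bar>dx\<bar> + \<bar>dy\<bar>)
     (2*\<bar>dx\<bar> - 1 + (if (dx > 0 \<and> \<not> r) \<or> (dx < 0 \<and> r) then 1 else 0)
      + (2*\<bar>dx\<bar> - 1 + (if (dx > 0 \<and> \<not> r) \<or> (dx < 0 \<and> r) then 1 else 0) - \<bar>dx\<bar> - \<bar>dy\<bar>) mod 2)"

lemma vert_up: "D dx dy r \<le> D dx (dy - 1) (\<not> r) + 1"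
  unfolding D_def by (cases "dx > 0"; cases "dx < 0"; cases r; cases "dy > 0"; simp; presburger)

lemma vert_down: "D dx dy r \<le> D dx (dy + 1) (\<not> r) + 1"
  unfolding D_def by (cases "dx > 0"; cases "dx < 0"; cases r; cases "dy < 0"; simp; presburger)

lemma hor_right: "r \<Longrightarrow> D dx dy r \<le> D (dx - 1) dy False + 1"
  unfolding D_def by (cases "dx > 1"; cases "dx < 1"; cases "dy < 0"; simp; presburger)

lemma hor_left: "\<not> r \<Longrightarrow> D dx dy r \<le> D (dx + 1) dy True + 1"
  unfolding D_def by (cases "dx > -1"; cases "dx < -1"; cases "dy < 0"; simp; presburger)



lemma dec_right: "r \<Longrightarrow> dx > 0 \<Longrightarrow> D (dx - 1) dy False + 1 = D dx dy r"
  unfolding D_def by (cases "dx > 1"; cases "dy < 0"; simp; presburger)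
lemma dec_left: "\<not> r \<Longrightarrow> dx < 0 \<Longrightarrow> D (dx + 1) dy True + 1 = D dx dy r"
  unfolding D_def by (cases "dx < -1"; cases "dy < 0"; simp; presburger)
lemma dec_up: "\<not>(dx > 0 \<and> r) \<Longrightarrow> \<not>(dx < 0 \<and> \<not> r) \<Longrightarrow> dy \<ge> 0 \<Longrightarrow> (dx,dy) \<noteq> (0,0) \<Longrightarrow>
   D dx (dy - 1) (\<not> r) + 1 = D dx dy r"
  unfolding D_def by (cases "dx > 0"; cases "dx < 0"; cases r; cases "dy > 0"; simp; presburger)
lemma dec_down: "\<not>(dx > 0 \<and> r) \<Longrightarrow> \<not>(dx < 0 \<and> \<not> r) \<Longrightarrow> dy < 0 \<Longrightarrow>
   D dx (dy + 1) (\<not> r) + 1 = D dx dy r"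
  unfolding D_def by (cases "dx > 0"; cases "dx < 0"; cases r; cases "dy < -1"; simp; presburger)
lemma D_nonneg: "D dx dy r \<ge> 0" unfolding D_def by (simp add: le_max_iff_disj)
lemma D_zero: "D dx dy r = 0 \<longleftrightarrow> dx = 0 \<and> dy = 0" unfolding D_def by (cases "dx > 0"; cases "dx < 0"; simp; presburger)



definition F :: "vtx \<Rightarrow> vtx \<Rightarrow> int" where
  "F a b = D (fst b - fst a) (snd b - snd a) (even (fst a + snd a))"

lemma F_step: assumes "hex_adj a w" shows "F a b \<le> F w b + 1"
proof -
  obtain i j where a: "a = (i,j)" by (cases a)
  obtain k l where b: "b = (k,l)" by (cases b)
  obtain i' j' where w: "w = (i',j')" by (cases w)
  from assms consider "w = (i, j + 1)" | "w = (i, j - 1)"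
     | "w = (i + 1, j)" "even (i + j)" | "w = (i - 1, j)" "odd (i + j)"
    unfolding a w hex_adj_def by (auto; presburger)
  then show ?thesis
  proof cases
    case 1 then show ?thesis using vert_up[of "k - i" "l - j" "even (i+j)"]
      unfolding a b F_def by (simp add: algebra_simps)
  next
    case 2 then show ?thesis using vert_down[of "k - i" "l - j" "even (i+j)"]
      unfolding a b F_def by (simp add: algebra_simps)
  next
    case 3 then show ?thesis using hor_right[of "even (i+j)" "k - i" "l - j"]
      unfolding a b F_def by (simp add: algebra_simps)
  next
    case 4
    then show ?thesis using hor_left[of "even (i+j)" "k - i" "l - j"]
      unfolding a b F_def by (simp add: algebra_simps)
  qed
qed

lemma walk_lower: "walk n a b \<Longrightarrow> F a b \<le> int n"
proof (induction n arbitrary: a)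
  case 0 then show ?case by (simp add: F_def D_zero[THEN iffD2])
next
  case (Suc n)
  then obtain w where "hex_adj a w" "walk n w b" by auto
  with Suc.IH[of w] F_step[of a w b] show ?case by simp
qed

lemma F_dec: assumes "a \<noteq> b" shows "\<exists>w. hex_adj a w \<and> F w b + 1 = F a b"
proof -
  obtain i j where a: "a = (i,j)" by (cases a)
  obtain k l where b: "b = (k,l)" by (cases b)
  define r where "r = even (i + j)"
  consider "k - i > 0" "r" | "k - i < 0" "\<not> r" | "\<not>(k-i > 0 \<and> r)" "\<not>(k-i < 0 \<and> \<not> r)" "l - j \<ge> 0"
     | "\<not>(k-i > 0 \<and> r)" "\<not>(k-i < 0 \<and> \<not> r)" "l - j < 0" by linarith
  then show ?thesis
  proof cases
    case 1
    have "hex_adj a (i+1,j)" using 1 unfolding a hex_adj_def r_def by simp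
    moreover have "F (i+1,j) b + 1 = F a b" using dec_right[of r "k-i" "l-j"] 1
      unfolding a b F_def r_def by (simp add: algebra_simps)
    ultimately show ?thesis by blast
  next
    case 2
    have "hex_adj a (i-1,j)" using 2 unfolding a hex_adj_def r_def by (simp; presburger?)
    moreover have "F (i-1,j) b + 1 = F a b" using dec_left[of r "k-i" "l-j"] 2
      unfolding a b F_def r_def by (simp add: algebra_simps; presburger?)
    ultimately show ?thesis by blast
  next
    case 3
    have "hex_adj a (i,j+1)" unfolding a hex_adj_def by simp
    moreover have "(k - i, l - j) \<noteq> (0,0)" using assms a b by auto
    moreover have "F (i,j+1) b + 1 = F a b" using dec_up[of "k-i" r "l-j"] 3 calculation(2)
      unfolding a b F_def r_def by (simp add: algebra_simps; presburger?)
    ultimately show ?thesis by blast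
  next
    case 4
    have "hex_adj a (i,j-1)" unfolding a hex_adj_def by simp
    moreover have "F (i,j-1) b + 1 = F a b" using dec_down[of "k-i" r "l-j"] 4
      unfolding a b F_def r_def by (simp add: algebra_simps; presburger?)
    ultimately show ?thesis by blast
  qed
qed

lemma F_nonneg: "F a b \<ge> 0" unfolding F_def by (rule D_nonneg)
lemma F_zero: "F a b = 0 \<longleftrightarrow> a = b" unfolding F_def D_zero by (auto simp: prod_eq_iff)

lemma walk_F: "F a b = int n \<Longrightarrow> walk n a b"
proof (induction n arbitrary: a)
  case 0 then show ?case using F_zero by simp
next
  case (Suc n)
  then have "F a b \<noteq> 0" by simp
  then have "a \<noteq> b" using F_zero by blast
  then obtain w where "hex_adj a w" "F w b + 1 = F a b" using F_dec by blast
  moreover have "walk n w b" using Suc.IH[of w] Suc.prems calculation by simp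
  ultimately show ?case unfolding walk.simps by blast
qed

lemma hdist_F: "int (hdist a b) = F a b"
proof -
  have "hdist a b = nat (F a b)" unfolding hdist_def
  proof (rule Least_equality)
    show "walk (nat (F a b)) a b" by (rule walk_F) (simp add: F_nonneg)
  next
    fix y assume "walk y a b" then show "nat (F a b) \<le> y" using walk_lower by fastforce
  qed
  then show ?thesis using F_nonneg by simp
qed



definition E :: "int \<Rightarrow> bool \<Rightarrow> int" where
  "E dx r = (if (dx > 0 \<and> \<not> r) \<or> (dx < 0 \<and> r) then 1 else 0)"

lemma D_facts: "D dx dy r \<ge> \<bar>dx\<bar> + \<bar>dy\<bar> \<and> D dx dy r \<ge> 2*\<bar>dx\<bar> - 1 + E dx r \<and>
   (D dx dy r = \<bar>dx\<bar> + \<bar>dy\<bar> \<or> D dx dy r \<le> 2*\<bar>dx\<bar> + E dx r)"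
proof -
  define M where "M = 2*\<bar>dx\<bar> - 1 + E dx r"
  define s where "s = \<bar>dx\<bar> + \<bar>dy\<bar>"
  define t where "t = (M - \<bar>dx\<bar> - \<bar>dy\<bar>) mod 2"
  have eq: "D dx dy r = max s (M + t)" by (simp only: D_def M_def s_def E_def t_def)
  have "0 \<le> t" "t \<le> 1" unfolding t_def by auto
  then have "D dx dy r \<ge> s \<and> D dx dy r \<ge> M \<and> (D dx dy r = s \<or> D dx dy r \<le> M + 1)"
    unfolding eq max_def by auto
  then show ?thesis unfolding M_def s_def by simp
qed

lemma cor0:
  assumes par: "(r \<and> 2*c = k \<and> 2*d = k \<and> 2*h + 1 = R) \<or> (\<not> r \<and> 2*c = k + 1 \<and> 2*d + 1 = k \<and> 2*h = R \<and> k \<ge> 3)"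
    and k: "k \<ge> 2" "R - k \<ge> 1" and sph: "D a b True = R"
    and far: "D (a - (0)) (b - (k)) r \<ge> R + k"
  shows "b = -a - R \<or> b = a - R"
  using par k sph far D_facts[of a b True] D_facts[of "a - (0)" "b - (k)" r]
  by (cases r; simp add: E_def abs_if split: if_splits; linarith?)

lemma cor1:
  assumes par: "(r \<and> 2*c = k \<and> 2*d = k \<and> 2*h + 1 = R) \<or> (\<not> r \<and> 2*c = k + 1 \<and> 2*d + 1 = k \<and> 2*h = R \<and> k \<ge> 3)"
    and k: "k \<ge> 2" "R - k \<ge> 1" and sph: "D a b True = R"
    and far: "D (a - (c)) (b - (d)) r \<ge> R + k"
  shows "a = -h \<or> b = -a - R"
  using par k sph far D_facts[of a b True] D_facts[of "a - (c)" "b - (d)" r]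
  by (cases r; simp add: E_def abs_if split: if_splits; linarith?)

lemma cor2:
  assumes par: "(r \<and> 2*c = k \<and> 2*d = k \<and> 2*h + 1 = R) \<or> (\<not> r \<and> 2*c = k + 1 \<and> 2*d + 1 = k \<and> 2*h = R \<and> k \<ge> 3)"
    and k: "k \<ge> 2" "R - k \<ge> 1" and sph: "D a b True = R"
    and far: "D (a - (c)) (b - (-d)) r \<ge> R + k"
  shows "a = -h \<or> b = a + R"
  using par k sph far D_facts[of a b True] D_facts[of "a - (c)" "b - (-d)" r]
  by (cases r; simp add: E_def abs_if split: if_splits; linarith?)

lemma cor3:
  assumes par: "(r \<and> 2*c = k \<and> 2*d = k \<and> 2*h + 1 = R) \<or> (\<not> r \<and> 2*c = k + 1 \<and> 2*d + 1 = k \<and> 2*h = R \<and> k \<ge> 3)"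
    and k: "k \<ge> 2" "R - k \<ge> 1" and sph: "D a b True = R"
    and far: "D (a - (0)) (b - (-k)) r \<ge> R + k"
  shows "b = a + R \<or> b = R - a"
  using par k sph far D_facts[of a b True] D_facts[of "a - (0)" "b - (-k)" r]
  by (cases r; simp add: E_def abs_if split: if_splits; linarith?)

lemma cor4:
  assumes par: "(r \<and> 2*c = k \<and> 2*d = k \<and> 2*h + 1 = R) \<or> (\<not> r \<and> 2*c = k + 1 \<and> 2*d + 1 = k \<and> 2*h = R \<and> k \<ge> 3)"
    and k: "k \<ge> 2" "R - k \<ge> 1" and sph: "D a b True = R"
    and far: "D (a - (-d)) (b - (-c)) r \<ge> R + k"
  shows "a = R - h \<or> b = R - a"
  using par k sph far D_facts[of a b True] D_facts[of "a - (-d)" "b - (-c)" r]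
  by (cases r; simp add: E_def abs_if split: if_splits; linarith?)

lemma cor5:
  assumes par: "(r \<and> 2*c = k \<and> 2*d = k \<and> 2*h + 1 = R) \<or> (\<not> r \<and> 2*c = k + 1 \<and> 2*d + 1 = k \<and> 2*h = R \<and> k \<ge> 3)"
    and k: "k \<ge> 2" "R - k \<ge> 1" and sph: "D a b True = R"
    and far: "D (a - (-d)) (b - (c)) r \<ge> R + k"
  shows "a = R - h \<or> b = a - R"
  using par k sph far D_facts[of a b True] D_facts[of "a - (-d)" "b - (c)" r]
  by (cases r; simp add: E_def abs_if split: if_splits; linarith?)

lemma Ddiag1: "D t t r = 2*\<bar>t\<bar>"
  unfolding D_def by (cases "t > 0"; cases "t < 0"; cases r; simp)
lemma Ddiag2: "D t (-t) r = 2*\<bar>t\<bar>"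
  unfolding D_def by (cases "t > 0"; cases "t < 0"; cases r; simp)
lemma Dvert: "D 0 t r = \<bar>t\<bar>" unfolding D_def by simp

lemma ss1: "D a1 b1 True = R \<Longrightarrow> D a2 b2 True = R \<Longrightarrow> b1 = a1 - R \<Longrightarrow> b2 = a2 - R \<Longrightarrow> D (a2-a1) (b2-b1) r \<le> R+1"
  using D_facts[of a1 b1 True] D_facts[of a2 b2 True] Ddiag1[of "a2-a1" r]
  by (simp add: E_def abs_if split: if_splits; linarith?)
lemma ss2: "D a1 b1 True = R \<Longrightarrow> D a2 b2 True = R \<Longrightarrow> b1 = -a1 - R \<Longrightarrow> b2 = -a2 - R \<Longrightarrow> D (a2-a1) (b2-b1) r \<le> R+1"
  using D_facts[of a1 b1 True] D_facts[of a2 b2 True] Ddiag2[of "a2-a1" r]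
  by (simp add: E_def abs_if split: if_splits; linarith?)
lemma ss3: "D a1 b1 True = R \<Longrightarrow> D a2 b2 True = R \<Longrightarrow> b1 = a1 + R \<Longrightarrow> b2 = a2 + R \<Longrightarrow> D (a2-a1) (b2-b1) r \<le> R+1"
  using D_facts[of a1 b1 True] D_facts[of a2 b2 True] Ddiag1[of "a2-a1" r]
  by (simp add: E_def abs_if split: if_splits; linarith?)
lemma ss4: "D a1 b1 True = R \<Longrightarrow> D a2 b2 True = R \<Longrightarrow> b1 = R - a1 \<Longrightarrow> b2 = R - a2 \<Longrightarrow> D (a2-a1) (b2-b1) r \<le> R+1"
  using D_facts[of a1 b1 True] D_facts[of a2 b2 True] Ddiag2[of "a2-a1" r]
  by (simp add: E_def abs_if split: if_splits; linarith?)
lemma ss5: "D a1 b1 True = R \<Longrightarrow> D a2 b2 True = R \<Longrightarrow> a1 = -h \<Longrightarrow> a2 = -h \<Longrightarrow> R \<le> 2*h + 1 \<Longrightarrow> D (a2-a1) (b2-b1) r \<le> R+1"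
  using D_facts[of a1 b1 True] D_facts[of a2 b2 True] Dvert[of "b2-b1" r]
  by (simp add: E_def abs_if split: if_splits; linarith?)
lemma ss6: "D a1 b1 True = R \<Longrightarrow> D a2 b2 True = R \<Longrightarrow> a1 = R - h \<Longrightarrow> a2 = R - h \<Longrightarrow> R \<le> 2*h + 1 \<Longrightarrow> 2*h \<le> R \<Longrightarrow> D (a2-a1) (b2-b1) r \<le> R+1"
  using D_facts[of a1 b1 True] D_facts[of a2 b2 True] Dvert[of "b2-b1" r]
  by (simp add: E_def abs_if split: if_splits; linarith?)

lemma reduce:
  fixes p q n :: nat and f :: "vtx \<Rightarrow> nat" and i0 j0 ci cj K Rr :: int
    and SA SB :: "int \<Rightarrow> int \<Rightarrow> bool"
  assumes col: "dist_coloring p n f"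
    and rv: "even (i0 + j0)"
    and Rr: "Rr = int (p + q + 1)" and pk: "int (2*p) = Rr + K - 1" and K2: "K \<ge> 2"
    and vK: "D ci cj True \<noteq> Rr"
    and rr: "r = even (ci + cj)"
    and side: "\<And>a b. D a b True = Rr \<Longrightarrow> D (a-ci) (b-cj) r \<ge> Rr + K \<Longrightarrow> SA a b \<or> SB a b"
    and cl1: "\<And>a1 b1 a2 b2 r'. D a1 b1 True = Rr \<Longrightarrow> D a2 b2 True = Rr \<Longrightarrow> SA a1 b1 \<Longrightarrow> SA a2 b2
       \<Longrightarrow> D (a2-a1) (b2-b1) r' \<le> Rr+1"
    and cl2: "\<And>a1 b1 a2 b2 r'. D a1 b1 True = Rr \<Longrightarrow> D a2 b2 True = Rr \<Longrightarrow> SB a1 b1 \<Longrightarrow> SB a2 b2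
       \<Longrightarrow> D (a2-a1) (b2-b1) r' \<le> Rr+1"
  shows "card {u \<in> sphere (i0,j0) (p+q+1). f u = f (i0+ci, j0+cj)} \<le> 2"
proof (rule ccontr)
  define v where "v = (i0+ci, j0+cj)"
  define T where "T = {u \<in> sphere (i0,j0) (p+q+1). f u = f v}"
  assume "\<not> card {u \<in> sphere (i0,j0) (p+q+1). f u = f (i0+ci, j0+cj)} \<le> 2"
  then have "3 \<le> card T" unfolding T_def v_def by simp
  then obtain T3 where T3: "T3 \<subseteq> T" "card T3 = 3" by (meson obtain_subset_with_card_n)
  then obtain u1 u2 u3 where U: "T3 = {u1,u2,u3}" "u1\<noteq>u2" "u2\<noteq>u3" "u1\<noteq>u3"
    by (auto simp: card_3_iff)
  then have mem: "u1 \<in> T" "u2 \<in> T" "u3 \<in> T" using T3 by auto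
  have distF: "F u w \<ge> int (2*p) + 1" if "u \<noteq> w" "f u = f w" for u w
  proof -
    from that have "\<not> hdist u w \<le> 2*p" using col unfolding dist_coloring_def by blast
    then show ?thesis using hdist_F[of u w] by linarith
  qed
  have sph: "D (fst u - i0) (snd u - j0) True = Rr" if "u \<in> T" for u
  proof -
    from that have "hdist (i0,j0) u = p+q+1" unfolding T_def sphere_def by simp
    then have "F (i0,j0) u = Rr" using hdist_F[of "(i0,j0)" u] Rr by simp
    then show ?thesis unfolding F_def using rv by simp
  qed
  have nv: "u \<noteq> v" if "u \<in> T" for u
  proof
    assume "u = v"
    then have "D (fst v - i0) (snd v - j0) True = Rr" using sph that by simp
    then show False using vK unfolding v_def by simp
  qed
  have far: "D ((fst u - i0) - ci) ((snd u - j0) - cj) r \<ge> Rr + K" if "u \<in> T" for u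
  proof -
    have "F v u \<ge> int (2*p) + 1" using distF[of v u] nv[OF that] that unfolding T_def by auto
    moreover have "even (fst v + snd v) = r" unfolding v_def rr using rv by simp presburger
    moreover have "fst u - fst v = (fst u - i0) - ci" "snd u - snd v = (snd u - j0) - cj"
      unfolding v_def by simp_all
    ultimately show ?thesis unfolding F_def using pk by simp
  qed
  have S: "SA (fst u - i0) (snd u - j0) \<or> SB (fst u - i0) (snd u - j0)" if "u \<in> T" for u
    using side[OF sph[OF that] far[OF that]] .
  have pair: "F u w \<ge> Rr + 2" if "u \<in> T" "w \<in> T" "u \<noteq> w" for u w
    using distF[of u w] that pk K2 unfolding T_def by auto
  have close: "F u w \<le> Rr + 1" if "u \<in> T" "w \<in> T"
     "(SA (fst u - i0) (snd u - j0) \<and> SA (fst w - i0) (snd w - j0)) \<or>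
      (SB (fst u - i0) (snd u - j0) \<and> SB (fst w - i0) (snd w - j0))" for u w
  proof -
    have e1: "fst w - fst u = (fst w - i0) - (fst u - i0)" "snd w - snd u = (snd w - j0) - (snd u - j0)" by simp_all
    show ?thesis using that(3)
    proof
      assume "SA (fst u - i0) (snd u - j0) \<and> SA (fst w - i0) (snd w - j0)"
      then show ?thesis using cl1[OF sph[OF that(1)] sph[OF that(2)], of "even (fst u + snd u)"]
        unfolding F_def e1 by blast
    next
      assume "SB (fst u - i0) (snd u - j0) \<and> SB (fst w - i0) (snd w - j0)"
      then show ?thesis using cl2[OF sph[OF that(1)] sph[OF that(2)], of "even (fst u + snd u)"]
        unfolding F_def e1 by blast
    qed
  qed
  have c12: "\<not> ((SA (fst u - i0) (snd u - j0) \<and> SA (fst w - i0) (snd w - j0)) \<or>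
      (SB (fst u - i0) (snd u - j0) \<and> SB (fst w - i0) (snd w - j0)))"
    if "u \<in> T" "w \<in> T" "u \<noteq> w" for u w
    using close[OF that(1,2)] pair[OF that] by linarith
  show False using c12[OF mem(1,2) U(2)] c12[OF mem(1,3) U(4)] c12[OF mem(2,3) U(3)]
    S[OF mem(1)] S[OF mem(2)] S[OF mem(3)] by blast
qed


theorem mainTheorem6:
  fixes p q n :: nat and x v :: vtx and f :: "vtx \<Rightarrow> nat"
  assumes "p \<ge> 2" and "q \<le> p - 2"
    and "right_vertex x"
    and "dist_coloring p n f"
    and "v \<in> corners x (p - q)"
  shows "card {u \<in> sphere x (p + q + 1). f u = f v} \<le> 2"
proof -
  obtain i0 j0 where x: "x = (i0,j0)" by (cases x)
  have rv: "even (i0+j0)" using assms(3) x right_vertex_def by simp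
  define K where "K = int (p - q)"
  define Rr where "Rr = int (p+q+1)"
  define c where "c = int ((p - q + 1) div 2)"
  define d where "d = int ((p - q) div 2)"
  define h where "h = Rr div 2"
  define r where "r = even K"
  have K2: "K \<ge> 2" and RK: "Rr - K \<ge> 1" and pk: "int (2*p) = Rr + K - 1"
    using assms(1,2) unfolding K_def Rr_def by auto
  have c_eq: "c = (K + 1) div 2" unfolding c_def K_def by (simp add: zdiv_int)
  have d_eq: "d = K div 2" unfolding d_def K_def by (simp add: zdiv_int)
  have Rr_eq: "Rr = K + 2 * int q + 1" unfolding Rr_def K_def using assms(1,2) by simp
  have par: "(r \<and> 2*c = K \<and> 2*d = K \<and> 2*h + 1 = Rr) \<or> (\<not> r \<and> 2*c = K + 1 \<and> 2*d + 1 = K \<and> 2*h = Rr \<and> K \<ge> 3)"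
    unfolding r_def c_eq d_eq h_def Rr_eq using K2 by presburger
  have hR: "Rr \<le> 2*h+1" "2*h \<le> Rr" using par by auto
  have cD: "D 0 K True = K" "D c d True = K" "D c (-d) True = K" "D 0 (-K) True = K"
      "D (-d) (-c) True = K" "D (-d) c True = K"
    using par K2 unfolding D_def by (cases r; simp; presburger?)+
  have KR: "K \<noteq> Rr" using RK by simp
  from assms(5) have "v \<in> {(i0, j0 + K), (i0 + c, j0 + d), (i0 + c, j0 - d), (i0, j0 - K), (i0 - d, j0 - c), (i0 - d, j0 + c)}"
    unfolding corners_def x K_def c_def d_def Let_def by simp
  then consider "v = (i0 + 0, j0 + K)" | "v = (i0 + c, j0 + d)" | "v = (i0 + c, j0 + - d)" | "v = (i0 + 0, j0 + - K)" | "v = (i0 + - d, j0 + - c)" | "v = (i0 + - d, j0 + c)" by auto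
  then show ?thesis
  proof cases
    case 1
    have "card {u \<in> sphere (i0,j0) (p+q+1). f u = f (i0 + 0, j0 + K)} \<le> 2"
    proof (rule reduce[where SA = "\<lambda>a b. b = -a - Rr" and SB = "\<lambda>a b. b = a - Rr" and r = r and K = K and Rr = Rr,
          OF assms(4) rv Rr_def pk K2])
      show "D (0) (K) True \<noteq> Rr" using cD KR by simp
      show "r = even (0 + K)" using par unfolding r_def by presburger
    next
      fix a b assume "D a b True = Rr" "D (a - (0)) (b - (K)) r \<ge> Rr + K"
      then show "(\<lambda>a b. b = -a - Rr) a b \<or> (\<lambda>a b. b = a - Rr) a b" using cor0[OF par K2 RK] by simp
    next
      fix a1 b1 a2 b2 r' assume "D a1 b1 True = Rr" "D a2 b2 True = Rr" "(\<lambda>a b. b = -a - Rr) a1 b1" "(\<lambda>a b. b = -a - Rr) a2 b2"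
      then show "D (a2-a1) (b2-b1) r' \<le> Rr+1" using ss2 hR by simp
    next
      fix a1 b1 a2 b2 r' assume "D a1 b1 True = Rr" "D a2 b2 True = Rr" "(\<lambda>a b. b = a - Rr) a1 b1" "(\<lambda>a b. b = a - Rr) a2 b2"
      then show "D (a2-a1) (b2-b1) r' \<le> Rr+1" using ss1 hR by simp
    qed
    then show ?thesis using 1 x by simp
  next
    case 2
    have "card {u \<in> sphere (i0,j0) (p+q+1). f u = f (i0 + c, j0 + d)} \<le> 2"
    proof (rule reduce[where SA = "\<lambda>a b. a = -h" and SB = "\<lambda>a b. b = -a - Rr" and r = r and K = K and Rr = Rr,
          OF assms(4) rv Rr_def pk K2])
      show "D (c) (d) True \<noteq> Rr" using cD KR by simp
      show "r = even (c + d)" using par unfolding r_def by presburger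
    next
      fix a b assume "D a b True = Rr" "D (a - (c)) (b - (d)) r \<ge> Rr + K"
      then show "(\<lambda>a b. a = -h) a b \<or> (\<lambda>a b. b = -a - Rr) a b" using cor1[OF par K2 RK] by simp
    next
      fix a1 b1 a2 b2 r' assume "D a1 b1 True = Rr" "D a2 b2 True = Rr" "(\<lambda>a b. a = -h) a1 b1" "(\<lambda>a b. a = -h) a2 b2"
      then show "D (a2-a1) (b2-b1) r' \<le> Rr+1" using ss5[where h=h] hR by simp
    next
      fix a1 b1 a2 b2 r' assume "D a1 b1 True = Rr" "D a2 b2 True = Rr" "(\<lambda>a b. b = -a - Rr) a1 b1" "(\<lambda>a b. b = -a - Rr) a2 b2"
      then show "D (a2-a1) (b2-b1) r' \<le> Rr+1" using ss2 hR by simp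
    qed
    then show ?thesis using 2 x by simp
  next
    case 3
    have "card {u \<in> sphere (i0,j0) (p+q+1). f u = f (i0 + c, j0 + - d)} \<le> 2"
    proof (rule reduce[where SA = "\<lambda>a b. a = -h" and SB = "\<lambda>a b. b = a + Rr" and r = r and K = K and Rr = Rr,
          OF assms(4) rv Rr_def pk K2])
      show "D (c) (- d) True \<noteq> Rr" using cD KR by simp
      show "r = even (c + - d)" using par unfolding r_def by presburger
    next
      fix a b assume "D a b True = Rr" "D (a - (c)) (b - (- d)) r \<ge> Rr + K"
      then show "(\<lambda>a b. a = -h) a b \<or> (\<lambda>a b. b = a + Rr) a b" using cor2[OF par K2 RK] by simp
    next
      fix a1 b1 a2 b2 r' assume "D a1 b1 True = Rr" "D a2 b2 True = Rr" "(\<lambda>a b. a = -h) a1 b1" "(\<lambda>a b. a = -h) a2 b2"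
      then show "D (a2-a1) (b2-b1) r' \<le> Rr+1" using ss5[where h=h] hR by simp
    next
      fix a1 b1 a2 b2 r' assume "D a1 b1 True = Rr" "D a2 b2 True = Rr" "(\<lambda>a b. b = a + Rr) a1 b1" "(\<lambda>a b. b = a + Rr) a2 b2"
      then show "D (a2-a1) (b2-b1) r' \<le> Rr+1" using ss3 hR by simp
    qed
    then show ?thesis using 3 x by simp
  next
    case 4
    have "card {u \<in> sphere (i0,j0) (p+q+1). f u = f (i0 + 0, j0 + - K)} \<le> 2"
    proof (rule reduce[where SA = "\<lambda>a b. b = a + Rr" and SB = "\<lambda>a b. b = Rr - a" and r = r and K = K and Rr = Rr,
          OF assms(4) rv Rr_def pk K2])
      show "D (0) (- K) True \<noteq> Rr" using cD KR by simp
      show "r = even (0 + - K)" using par unfolding r_def by presburger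
    next
      fix a b assume "D a b True = Rr" "D (a - (0)) (b - (- K)) r \<ge> Rr + K"
      then show "(\<lambda>a b. b = a + Rr) a b \<or> (\<lambda>a b. b = Rr - a) a b" using cor3[OF par K2 RK] by simp
    next
      fix a1 b1 a2 b2 r' assume "D a1 b1 True = Rr" "D a2 b2 True = Rr" "(\<lambda>a b. b = a + Rr) a1 b1" "(\<lambda>a b. b = a + Rr) a2 b2"
      then show "D (a2-a1) (b2-b1) r' \<le> Rr+1" using ss3 hR by simp
    next
      fix a1 b1 a2 b2 r' assume "D a1 b1 True = Rr" "D a2 b2 True = Rr" "(\<lambda>a b. b = Rr - a) a1 b1" "(\<lambda>a b. b = Rr - a) a2 b2"
      then show "D (a2-a1) (b2-b1) r' \<le> Rr+1" using ss4 hR by simp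
    qed
    then show ?thesis using 4 x by simp
  next
    case 5
    have "card {u \<in> sphere (i0,j0) (p+q+1). f u = f (i0 + - d, j0 + - c)} \<le> 2"
    proof (rule reduce[where SA = "\<lambda>a b. a = Rr - h" and SB = "\<lambda>a b. b = Rr - a" and r = r and K = K and Rr = Rr,
          OF assms(4) rv Rr_def pk K2])
      show "D (- d) (- c) True \<noteq> Rr" using cD KR by simp
      show "r = even (- d + - c)" using par unfolding r_def by presburger
    next
      fix a b assume "D a b True = Rr" "D (a - (- d)) (b - (- c)) r \<ge> Rr + K"
      then show "(\<lambda>a b. a = Rr - h) a b \<or> (\<lambda>a b. b = Rr - a) a b" using cor4[OF par K2 RK] by simp
    next
      fix a1 b1 a2 b2 r' assume "D a1 b1 True = Rr" "D a2 b2 True = Rr" "(\<lambda>a b. a = Rr - h) a1 b1" "(\<lambda>a b. a = Rr - h) a2 b2"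
      then show "D (a2-a1) (b2-b1) r' \<le> Rr+1" using ss6[where h=h] hR by simp
    next
      fix a1 b1 a2 b2 r' assume "D a1 b1 True = Rr" "D a2 b2 True = Rr" "(\<lambda>a b. b = Rr - a) a1 b1" "(\<lambda>a b. b = Rr - a) a2 b2"
      then show "D (a2-a1) (b2-b1) r' \<le> Rr+1" using ss4 hR by simp
    qed
    then show ?thesis using 5 x by simp
  next
    case 6
    have "card {u \<in> sphere (i0,j0) (p+q+1). f u = f (i0 + - d, j0 + c)} \<le> 2"
    proof (rule reduce[where SA = "\<lambda>a b. a = Rr - h" and SB = "\<lambda>a b. b = a - Rr" and r = r and K = K and Rr = Rr,
          OF assms(4) rv Rr_def pk K2])
      show "D (- d) (c) True \<noteq> Rr" using cD KR by simp
      show "r = even (- d + c)" using par unfolding r_def by presburger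
    next
      fix a b assume "D a b True = Rr" "D (a - (- d)) (b - (c)) r \<ge> Rr + K"
      then show "(\<lambda>a b. a = Rr - h) a b \<or> (\<lambda>a b. b = a - Rr) a b" using cor5[OF par K2 RK] by simp
    next
      fix a1 b1 a2 b2 r' assume "D a1 b1 True = Rr" "D a2 b2 True = Rr" "(\<lambda>a b. a = Rr - h) a1 b1" "(\<lambda>a b. a = Rr - h) a2 b2"
      then show "D (a2-a1) (b2-b1) r' \<le> Rr+1" using ss6[where h=h] hR by simp
    next
      fix a1 b1 a2 b2 r' assume "D a1 b1 True = Rr" "D a2 b2 True = Rr" "(\<lambda>a b. b = a - Rr) a1 b1" "(\<lambda>a b. b = a - Rr) a2 b2"
      then show "D (a2-a1) (b2-b1) r' \<le> Rr+1" using ss1 hR by simp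
    qed
    then show ?thesis using 6 x by simp
  qed
qed

end
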